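(* Let $k=2j$ with $j\ge1$, let $p\in\mathbb{S}^n$, $R\in(0,\pi/2)$, $B_R=\{q:\mathbf{d}_p(q)\le R\}$, and let $x,y\in\partial B_R$ with $x\neq y$; set $r=\mathbf{d}_y(x)$. Then \[\tan R\,\langle\Psi_y,\nabla\mathbf{d}_p\rangle\big|_x=-\sum_{i=0}^{j-1}a_{i+1}(1-\cos r)^{-i},\] where $a_1=\frac{1}{2j-1}$ and $a_{i+1}=\frac{2(j-i)}{2j-(i+1)}a_i$ for $i=1,\dots,j-1$.
   Context: $\mathbb{S}^n$ is the unit round sphere with Levi-Civita connection $\nabla$; $\mathbf{d}_q$ is geodesic distance from $q$. $I_k(r)=\int_0^r\sin^{k-1}s\,ds$, $\varphi(t)=I_k(t)\sin^{1-k}t$ for $t\in(0,\pi)$, $\varphi(0)=0$, $\Phi_q=(\varphi\circ\mathbf{d}_q)\nabla\mathbf{d}_q$ on $\mathbb{S}^n\setminus\{-q\}$, and $\Psi_q:=\Phi_{-q}$ on $\mathbb{S}^n\setminus\{q\}$. *)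

theory Defs
  imports "HOL-Analysis.Analysis"
begin

text \<open>The unit round sphere S^n is modelled as the unit sphere of a Euclidean space 'a
  (so n + 1 = DIM('a)).  Geodesic distance from q.\<close>
definition gdist :: "'a::euclidean_space \<Rightarrow> 'a \<Rightarrow> real" where
  "gdist q x = arccos (inner q x)"

definition sgrad :: "('a::euclidean_space \<Rightarrow> real) \<Rightarrow> 'a \<Rightarrow> 'a" where
  "sgrad f x = (THE v. inner v x = 0 \<and>
      (f has_derivative (\<lambda>h. inner v h)) (at x within sphere 0 1))"

definition Ik :: "nat \<Rightarrow> real \<Rightarrow> real" where
  "Ik k r = integral {0..r} (\<lambda>s. sin s ^ (k - 1))"

definition phik :: "nat \<Rightarrow> real \<Rightarrow> real" where
  "phik k t = (if t = 0 then 0 else Ik k t / sin t ^ (k - 1))"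

definition Phi :: "nat \<Rightarrow> 'a::euclidean_space \<Rightarrow> 'a \<Rightarrow> 'a" where
  "Phi k q x = phik k (gdist q x) *\<^sub>R sgrad (gdist q) x"

definition Psi :: "nat \<Rightarrow> 'a::euclidean_space \<Rightarrow> 'a \<Rightarrow> 'a" where
  "Psi k q = Phi k (- q)"

fun coef :: "nat \<Rightarrow> nat \<Rightarrow> real" where
  "coef j 0 = 0"
| "coef j (Suc 0) = 1 / (2 * real j - 1)"
| "coef j (Suc (Suc i)) =
     2 * (real j - real (Suc i)) / (2 * real j - real (Suc (Suc i))) * coef j (Suc i)"

end

theory Submission
  imports Defs
begin


lemma inner_deriv0:
  fixes x :: "'a::euclidean_space"
  assumes x: "x \<in> sphere 0 1"
  shows "((\<lambda>y. inner x y) has_derivative (\<lambda>h. 0)) (at x within sphere 0 1)"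
proof -
  have "((\<lambda>y. 1 - inner (y - x) (y - x) / 2) has_derivative
        (\<lambda>h. 0 - (inner h (x - x) + inner (x - x) h) / 2)) (at x within sphere 0 1)"
    by (auto intro!: derivative_eq_intros)
  then have d: "((\<lambda>y. 1 - inner (y - x) (y - x) / 2) has_derivative (\<lambda>h. 0)) (at x within sphere 0 1)"
    by simp
  show ?thesis
  proof (rule has_derivative_transform_within[OF d zero_less_one x])
    fix y assume "y \<in> sphere (0::'a) 1"
    then have "inner y y = 1" "inner x x = 1" using x by (auto simp: dot_square_norm)
    then show "1 - inner (y - x) (y - x) / 2 = inner x y"
      by (simp add: inner_diff_left inner_diff_right inner_commute field_simps)
  qed
qed

lemma grad_unique:
  fixes x v1 v2 :: "'a::euclidean_space"
  assumes x: "x \<in> sphere 0 1" and o1: "inner v1 x = 0" and o2: "inner v2 x = 0"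
    and d1: "(f has_derivative (\<lambda>h. inner v1 h)) (at x within sphere 0 1)"
    and d2: "(f has_derivative (\<lambda>h. inner v2 h)) (at x within sphere 0 1)"
  shows "v1 = v2"
proof (rule ccontr)
  assume ne: "v1 \<noteq> v2"
  define u where "u = v1 - v2"
  define w where "w = (1 / norm u) *\<^sub>R u"
  have nu: "norm u \<noteq> 0" using ne by (simp add: u_def)
  have nw: "inner w w = 1" using nu by (simp add: w_def dot_square_norm)
  have wx: "inner w x = 0" using o1 o2 by (simp add: w_def u_def inner_diff_left)
  have xx: "inner x x = 1" using x by (simp add: dot_square_norm)
  define g where "g = (\<lambda>t::real. cos t *\<^sub>R x + sin t *\<^sub>R w)"
  have gs: "g ` UNIV \<subseteq> sphere 0 1"
  proof
    fix z assume "z \<in> g ` UNIV"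
    then obtain t where z: "z = g t" by auto
    have "inner z z = (cos t)^2 * inner x x + (sin t)^2 * inner w w + 2 * cos t * sin t * inner w x"
      by (simp add: z g_def inner_add_left inner_add_right inner_commute power2_eq_square algebra_simps)
    also have "\<dots> = 1" using nw wx xx by simp
    finally have "norm z ^ 2 = 1" by (simp add: dot_square_norm)
    then show "z \<in> sphere 0 1" using norm_ge_zero[of z] by (auto simp: power2_eq_1_iff)
  qed
  have g0: "g 0 = x" by (simp add: g_def)
  have "(g has_vector_derivative (- sin 0 *\<^sub>R x + cos 0 *\<^sub>R w)) (at 0)"
    unfolding g_def by (auto intro!: derivative_eq_intros)
  then have dg: "(g has_derivative (\<lambda>t. t *\<^sub>R w)) (at 0 within UNIV)"
    by (simp add: has_vector_derivative_def)
  have c1: "((f \<circ> g) has_derivative ((\<lambda>h. inner v1 h) \<circ> (\<lambda>t. t *\<^sub>R w))) (at 0)"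
    using diff_chain_within[OF dg has_derivative_subset[OF d1[folded g0] gs]] by simp
  have c2: "((f \<circ> g) has_derivative ((\<lambda>h. inner v2 h) \<circ> (\<lambda>t. t *\<^sub>R w))) (at 0)"
    using diff_chain_within[OF dg has_derivative_subset[OF d2[folded g0] gs]] by simp
  have "((\<lambda>h. inner v1 h) \<circ> (\<lambda>t. t *\<^sub>R w)) = ((\<lambda>h. inner v2 h) \<circ> (\<lambda>t. t *\<^sub>R w))"
    by (rule has_derivative_unique[OF c1 c2])
  then have "inner v1 w = inner v2 w" by (metis comp_apply scaleR_one)
  then have "inner u w = 0" by (simp add: u_def inner_diff_left)
  then have "inner u u = 0" using nu by (simp add: w_def)
  then show False using nu by simp
qed

lemma sgrad_gdist:
  fixes q x :: "'a::euclidean_space"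
  assumes x: "x \<in> sphere 0 1" and c: "-1 < inner q x" "inner q x < 1"
  shows "sgrad (gdist q) x = (- (1 / sqrt (1 - (inner q x)^2))) *\<^sub>R (q - inner q x *\<^sub>R x)"
proof -
  define c where "c = inner q x"
  define s where "s = sqrt (1 - c^2)"
  have "c^2 < 1" using c by (simp add: c_def abs_square_less_1 abs_less_iff)
  then have s0: "s > 0" by (simp add: s_def)
  define v where "v = (- (1 / s)) *\<^sub>R (q - c *\<^sub>R x)"
  have xx: "inner x x = 1" using x by (simp add: dot_square_norm)
  have vx: "inner v x = 0" by (simp add: v_def inner_diff_left xx c_def)
  have da: "((\<lambda>y. arccos (inner q y)) has_derivative (\<lambda>h. inverse (- sqrt (1 - c\<^sup>2)) * inner q h)) (at x within sphere 0 1)"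
    unfolding c_def using c
    by (auto intro!: derivative_eq_intros has_derivative_arccos[unfolded has_field_derivative_def]
           simp: has_field_derivative_def)
  have d2: "((\<lambda>y. (c / s) * inner x y) has_derivative (\<lambda>h. (c / s) * inner x h)) (at x within sphere 0 1)"
    by (intro derivative_eq_intros) simp_all
  have d3: "((\<lambda>y. (c / s) * inner x y) has_derivative (\<lambda>h. (c / s) * 0)) (at x within sphere 0 1)"
    by (rule has_derivative_mult_right[OF inner_deriv0[OF x]])
  note d4 = has_derivative_diff[OF has_derivative_add[OF da d2] d3]
  have dv: "(gdist q has_derivative (\<lambda>h. inner v h)) (at x within sphere 0 1)"
  proof -
    have e1: "(\<lambda>y. arccos (inner q y) + c / s * inner x y - c / s * inner x y) = gdist q"
      by (auto simp: gdist_def fun_eq_iff)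
    have e2: "(\<lambda>h. inverse (- sqrt (1 - c\<^sup>2)) * inner q h + c / s * inner x h - c / s * 0) = (\<lambda>h. inner v h)"
      using s0 by (auto simp: fun_eq_iff v_def s_def[symmetric] inner_diff_left field_simps)
    show ?thesis using d4 unfolding e1 e2 .
  qed
  have "sgrad (gdist q) x = v"
    unfolding sgrad_def
    apply (rule the_equality)
    using vx dv grad_unique[OF x] by blast+
  then show ?thesis by (simp add: v_def s_def c_def)
qed



lemma coef_rec:
  assumes "i + 1 < j"
  shows "(2 * real j - real (i + 2)) * coef j (i + 2) = 2 * (real j - real (i + 1)) * coef j (i + 1)"
proof -
  have "2 * real j - real (i + 2) \<noteq> 0" using assms by linarith
  then show ?thesis
    using coef.simps(3)[of j i] by (simp add: numeral_2_eq_2 field_simps)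
qed

lemma coef_last:
  assumes "j \<ge> 1" shows "coef j (j + 1) = 0"
proof -
  obtain m where j: "j = Suc m" using assms by (cases j) auto
  show ?thesis unfolding j using coef.simps(3)[of "Suc m" m] by simp
qed

lemma coef_first:
  assumes "j \<ge> 1" shows "(2 * real j - 1) * coef j 1 = 1"
proof -
  have "2 * real j - 1 \<noteq> 0" using assms by linarith
  then show ?thesis by simp
qed

lemma alg_identity:
  fixes u w :: real
  assumes j: "j \<ge> 1" and uw: "u = 2 - w"
  shows "(\<Sum>i<j. coef j (i+1) * (real j * u^(j-1) * w^(j-1-i)
            - u^j * (real (j-1-i) * w^(j-1-i-1))))
         = u^(j-1) * w^(j-1)"
proof -
  define T where "T m = (2 * real j - real m) * coef j m * w^(j - m)" for m
  have step: "coef j (i+1) * (real j * u^(j-1) * w^(j-1-i) - u^j * (real (j-1-i) * w^(j-1-i-1)))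
        = u^(j-1) * (T (i+1) - T (Suc i + 1))" if i: "i < j" for i
  proof (cases "i + 1 < j")
    case True
    obtain m where n: "j - 1 - i = Suc m" using True by (metis Suc_diff_Suc add.commute diff_diff_left plus_1_eq_Suc)
    have uj: "u^j = u * u^(j-1)" using j by (metis One_nat_def Suc_pred le_eq_less_or_eq less_le_trans power_Suc zero_less_one)
    have e1: "j - (i+1) = Suc m" using n by simp
    have e2: "j - (Suc i + 1) = m" using n by simp
    have rn: "real (j-1-i) = real j - 1 - real i" using True by (simp add: of_nat_diff)
    have cr: "(2 * real j - real (i + 2)) * coef j (i + 2) = 2 * (real j - real (i + 1)) * coef j (i + 1)"
      by (rule coef_rec[OF True])
    have t2: "T (Suc i + 1) = 2 * (real j - real (i + 1)) * coef j (i + 1) * w^m"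
      unfolding T_def e2 using cr by (simp add: numeral_2_eq_2)
    have t1: "T (i + 1) = (2 * real j - real (i+1)) * coef j (i + 1) * (w * w^m)"
      unfolding T_def e1 by simp
    have p1: "w^(j-1-i) = w * w^m" "w^(j-1-i-1) = w^m" using n by simp_all
    show ?thesis
    proof -
      have gen: "\<And>P A W. A*(real j*P*(w*W) - ((2-w)*P)*((real j - 1 - real i)*W))
         = P*((2*real j - real(i+1))*A*(w*W) - 2*(real j - real(i+1))*A*W)"
        by (simp add: algebra_simps)
      show ?thesis unfolding t1 t2 p1 rn uj unfolding uw by (rule gen)
    qed
  next
    case False
    then have ij: "i = j - 1" using i by simp
    have "T (Suc i + 1) = 0" unfolding T_def using coef_last[OF j] ij j by simp
    moreover have "T (i+1) = real j * coef j j" unfolding T_def using ij j by simp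
    ultimately show ?thesis using ij j by (simp add: algebra_simps)
  qed
  have "(\<Sum>i<j. coef j (i+1) * (real j * u^(j-1) * w^(j-1-i)
            - u^j * (real (j-1-i) * w^(j-1-i-1))))
        = (\<Sum>i<j. u^(j-1) * (T (i+1) - T (Suc i + 1)))"
    by (rule sum.cong) (use step in auto)
  also have "\<dots> = u^(j-1) * (\<Sum>i<j. T (i+1) - T (Suc i + 1))"
    by (simp add: sum_distrib_left)
  also have "(\<Sum>i<j. T (i+1) - T (Suc i + 1)) = T 1 - T (j + 1)"
    using sum_lessThan_telescope'[of "\<lambda>i. T (i+1)" j] by simp
  also have "T (j+1) = 0" unfolding T_def using coef_last[OF j] by simp
  also have "T 1 = w^(j-1)" unfolding T_def using coef_first[OF j] by simp
  finally show ?thesis by simp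
qed



lemma term_deriv:
  "((\<lambda>s. coef j (i+1) * ((1 - cos s)^j * (1 + cos s)^(j-1-i))) has_real_derivative
     (coef j (i+1) * (real j * (1 - cos s)^(j-1) * (1 + cos s)^(j-1-i)
            - (1 - cos s)^j * (real (j-1-i) * (1 + cos s)^(j-1-i-1)))) * sin s) (at s)"
  by (auto intro!: derivative_eq_intros simp: algebra_simps)

lemma Ik_closed:
  assumes j: "j \<ge> 1" and t: "0 \<le> t"
  shows "Ik (2*j) t = (\<Sum>i<j. coef j (i+1) * ((1 - cos t)^j * (1 + cos t)^(j-1-i)))"
proof -
  define H where "H s = (\<Sum>i<j. coef j (i+1) * ((1 - cos s)^j * (1 + cos s)^(j-1-i)))" for s
  have dH: "(H has_real_derivative sin s ^ (2*j - 1)) (at s)" for s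
  proof -
    have "(H has_real_derivative (\<Sum>i<j. (coef j (i+1) * (real j * (1 - cos s)^(j-1) * (1 + cos s)^(j-1-i)
            - (1 - cos s)^j * (real (j-1-i) * (1 + cos s)^(j-1-i-1)))) * sin s)) (at s)"
      unfolding H_def by (rule DERIV_sum) (rule term_deriv)
    also have "(\<Sum>i<j. (coef j (i+1) * (real j * (1 - cos s)^(j-1) * (1 + cos s)^(j-1-i)
            - (1 - cos s)^j * (real (j-1-i) * (1 + cos s)^(j-1-i-1)))) * sin s)
        = ((1 - cos s)^(j-1) * (1 + cos s)^(j-1)) * sin s"
      unfolding sum_distrib_right[symmetric] using alg_identity[OF j, of "1 - cos s" "1 + cos s"]
      by (simp add: mult.assoc)
    also have "\<dots> = sin s ^ (2*j - 1)"
    proof -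
      have "(1 - cos s) * (1 + cos s) = sin s ^ 2" by (simp add: sin_squared_eq algebra_simps power2_eq_square)
      moreover have "2*j - 1 = Suc (2*(j-1))" using j by simp
      ultimately show ?thesis
        by (simp add: power_mult_distrib[symmetric] power_mult)
    qed
    finally show ?thesis .
  qed
  have "((\<lambda>s. sin s ^ (2*j - 1)) has_integral (H t - H 0)) {0..t}"
    by (rule fundamental_theorem_of_calculus[OF t])
       (use dH in \<open>auto intro: has_field_derivative_at_within simp: has_real_derivative_iff_has_vector_derivative[symmetric]\<close>)
  moreover have "H 0 = 0" unfolding H_def using j by (simp add: power_0_left)
  ultimately have "integral {0..t} (\<lambda>s. sin s ^ (2*j - 1)) = H t" by (simp add: integral_unique)
  then show ?thesis by (simp add: Ik_def H_def)
qed



lemma final_alg: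
  fixes a b :: real
  assumes a: "a > 0" and b: "b > 0"
  shows "(\<Sum>i<j. coef j (i+1) * (a^j * b^(j-1-i))) * b / (a * b)^j
       = (\<Sum>i<j. coef j (i + 1) / b ^ i)"
  unfolding sum_distrib_right sum_divide_distrib
proof (rule sum.cong[OF refl])
  fix i assume "i \<in> {..<j}"
  then have i: "i < j" by simp
  have e: "b^(j-1-i) * b = b^(j-i)" using i
    by (metis Suc_diff_Suc diff_Suc_1 diff_diff_left mult.commute plus_1_eq_Suc power_Suc)
  have e2: "b^j = b^(j-i) * b^i" using i by (simp add: power_add[symmetric])
  show "coef j (i+1) * (a^j * b^(j-1-i)) * b / (a * b)^j = coef j (i + 1) / b ^ i"
    using a b unfolding power_mult_distrib by (simp add: e2 e[symmetric] field_simps)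
qed



theorem lemma2p8:
  fixes p x y :: "'a::euclidean_space" and j k :: nat and R :: real
  assumes "j \<ge> 1" and "k = 2 * j"
    and "p \<in> sphere 0 1" and "0 < R" and "R < pi / 2"
    and "x \<in> sphere 0 1" and "y \<in> sphere 0 1"
    and "gdist p x = R" and "gdist p y = R" and "x \<noteq> y"
  shows "tan R * inner (Psi k y x) (sgrad (gdist p) x)
           = - (\<Sum>i<j. coef j (i + 1) / (1 - cos (gdist y x)) ^ i)"
proof -
  note j = assms(1) and kj = assms(2) and ps = assms(3) and R0 = assms(4) and R1 = assms(5)
    and xs = assms(6) and ys = assms(7) and px = assms(8) and py = assms(9) and xy = assms(10)
  have xx: "inner x x = 1" using xs by (simp add: dot_square_norm)
  have yy: "inner y y = 1" using ys by (simp add: dot_square_norm)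
  have bnd: "\<bar>inner u v\<bar> \<le> 1" if "u \<in> sphere 0 1" "v \<in> sphere 0 1" for u v :: 'a
    using Cauchy_Schwarz_ineq2[of u v] that by simp
  have cpx: "inner p x = cos R"
  proof -
    have "-1 \<le> inner p x" "inner p x \<le> 1" using bnd[OF ps xs] by auto
    then have "cos (arccos (inner p x)) = inner p x" by (rule cos_arccos)
    then show ?thesis using px by (simp add: gdist_def)
  qed
  have cpy: "inner p y = cos R"
  proof -
    have "-1 \<le> inner p y" "inner p y \<le> 1" using bnd[OF ps ys] by auto
    then have "cos (arccos (inner p y)) = inner p y" by (rule cos_arccos)
    then show ?thesis using py by (simp add: gdist_def)
  qed
  have cR0: "cos R > 0" using R0 R1 by (intro cos_gt_zero_pi) auto
  have sR0: "sin R > 0" using R0 R1 by (intro sin_gt_zero) auto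
  have cR1: "cos R < 1"
  proof -
    have "cos R \<noteq> 1"
    proof
      assume "cos R = 1"
      then have "(sin R)^2 = 0" using sin_cos_squared_add[of R] by simp
      then show False using sR0 by simp
    qed
    then show ?thesis using cos_le_one[of R] by linarith
  qed
  define c where "c = inner y x"
  have c1: "c < 1"
  proof (rule ccontr)
    assume "\<not> c < 1"
    then have "c = 1" using bnd[OF ys xs] by (simp add: c_def)
    then have "inner (x - y) (x - y) = 0"
      using xx yy by (simp add: c_def inner_diff_left inner_diff_right inner_commute)
    then show False using xy by simp
  qed
  have c2: "-1 < c"
  proof (rule ccontr)
    assume "\<not> -1 < c"
    then have "c = -1" using bnd[OF ys xs] by (simp add: c_def)
    then have "inner (x + y) (x + y) = 0"
      using xx yy by (simp add: c_def inner_add_left inner_add_right inner_commute)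
    then have "x = - y" by (simp add: eq_neg_iff_add_eq_0)
    then have "inner p x = - inner p y" by simp
    then show False using cpx cpy cR0 by simp
  qed
  define s where "s = sqrt (1 - c^2)"
  have "c^2 < 1" using c1 c2 by (simp add: abs_square_less_1 abs_less_iff)
  then have s0: "s > 0" by (simp add: s_def)
  define r where "r = arccos c"
  have gyx: "gdist y x = r" by (simp add: gdist_def r_def c_def)
  have cr: "cos r = c" using c1 c2 by (simp add: r_def)
  have sr: "sin r = s" using c1 c2 by (simp add: r_def s_def sin_arccos)
  define t where "t = pi - r"
  have gmy: "gdist (-y) x = t"
  proof -
    have "arccos (- c) = pi - arccos c" using c1 c2 by (intro arccos_minus) auto
    then show ?thesis by (simp add: gdist_def t_def r_def c_def)
  qed
  have r0: "0 < r" "r < pi" using c1 c2 by (auto simp: r_def arccos_lt_bounded)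
  have t0: "t \<noteq> 0" "0 \<le> t" using r0 by (auto simp: t_def)
  have ct: "cos t = - c" and st: "sin t = s" using cr sr by (simp_all add: t_def)
  have gradp: "sgrad (gdist p) x = (- (1 / sin R)) *\<^sub>R (p - cos R *\<^sub>R x)"
  proof -
    have "sqrt (1 - (cos R)^2) = sin R"
      using sR0 by (simp add: cos_squared_eq)
    then show ?thesis using sgrad_gdist[OF xs, of p] cpx cR0 cR1 by simp
  qed
  have gradmy: "sgrad (gdist (-y)) x = (1 / s) *\<^sub>R (y - c *\<^sub>R x)"
    using sgrad_gdist[OF xs, of "-y"] c1 c2 by (simp add: c_def s_def algebra_simps)
  have phi: "phik k t = Ik k t / s^(k-1)" using t0 st by (simp add: phik_def)
  have Psi: "Psi k y x = (Ik k t / s^(k-1) / s) *\<^sub>R (y - c *\<^sub>R x)"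
    by (simp add: Psi_def Phi_def gmy gradmy phi)
  have inn: "inner (y - c *\<^sub>R x) (p - cos R *\<^sub>R x) = cos R * (1 - c)"
    using cpx cpy xx unfolding c_def
    by (simp add: inner_diff_left inner_diff_right inner_commute algebra_simps)
  have lhs: "tan R * inner (Psi k y x) (sgrad (gdist p) x) = - (Ik k t * (1 - c) / s^k)"
  proof -
    have "tan R * inner (Psi k y x) (sgrad (gdist p) x)
        = tan R * ((Ik k t / s^(k-1) / s) * (- (1 / sin R)) * (cos R * (1 - c)))"
      unfolding Psi gradp inner_scaleR_left inner_scaleR_right inn using sR0 s0 by (simp add: field_simps)
    also have "\<dots> = - (Ik k t * (1 - c) / (s^(k-1) * s))"
      using sR0 cR0 s0 by (simp add: tan_def field_simps)
    also have "k = Suc (k-1)" using j kj by simp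
    then have "s^(k-1) * s = s^k" by (metis power_Suc2)
    finally show ?thesis .
  qed
  have Ikt: "Ik k t = (\<Sum>i<j. coef j (i+1) * ((1 + c)^j * (1 - c)^(j-1-i)))"
    using Ik_closed[OF j t0(2)] kj ct by simp
  have sk: "s^k = ((1 + c) * (1 - c))^j"
  proof -
    have "s^2 = 1 - c^2" using \<open>c^2 < 1\<close> by (simp add: s_def)
    then have e: "s^2 = (1 + c) * (1 - c)" by (simp add: algebra_simps power2_eq_square)
    have "s^k = (s^2)^j" using kj by (simp add: power_mult)
    then show ?thesis unfolding e .
  qed
  have "Ik k t * (1 - c) / s^k = (\<Sum>i<j. coef j (i + 1) / (1 - c) ^ i)"
    unfolding Ikt sk by (rule final_alg) (use c1 c2 in auto)
  then show ?thesis unfolding lhs gyx cr by simp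
qed


end
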